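(* Let $0<\epsilon\le 1$, $r>0$ be constants, $p_2=\frac{1-\epsilon}{n}$, $p_3=\frac{r}{n\ln n}$ (so $p_2=0$ when $\epsilon=1$), and $K_0=\max\{1,\tfrac{2(9+\epsilon)}{r}\}$. For any two distinct vertices $v_1,v_2$ of $\mathbb{G}(n,p_2,p_3)$, $$\Pr\big[|C_{\{v_1,v_2\}}|\ge K_0\ln n\big]\le n^{I_{\epsilon,r}+o(1)}\qquad(n\to\infty),$$ where $I_{\epsilon,r}=\int_0^{\epsilon/r}[1-\lambda(\omega)+\ln\lambda(\omega)]d\omega=-\frac1r\big[\epsilon-\frac{\epsilon^2}{2}+(1-\epsilon)\ln(1-\epsilon)\big]$ (with $(1-\epsilon)\ln(1-\epsilon)=0$ for $\epsilon=1$) and $\lambda(x)=1-\epsilon+rx$.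
   Context: $\mathbb{G}(n,p_2,p_3)$ is the random hypergraph on a vertex set $V$ with $|V|=n$ in which each of the $\binom n2$ possible 2-element edges is present with probability $p_2$ and each of the $\binom n3$ possible 3-element hyperedges is present with probability $p_3$, all independently. Propagation process from a set of vertices: one maintains a set $\mathcal{Y}_t$ of active vertices and a set $\mathcal{D}_t$ of inactive vertices; vertices in neither set are unexplored. At time $t=0,1,2,\dots$, while $\mathcal{Y}_t\neq\emptyset$, pick an active vertex $v_t\in\mathcal{Y}_t$ and let $U_t$ be the set of unexplored vertices $u$ such that $\{v_t,u\}$ is a 2-edge or $\{v_t,u,w\}$ is a 3-edge for some $w\in\mathcal{D}_t$; set $\mathcal{Y}_{t+1}=(\mathcal{Y}_t\cup U_t)\setminus\{v_t\}$ and $\mathcal{D}_{t+1}=\mathcal{D}_t\cup\{v_t\}$. The process stops at $T=\min\{t:\mathcal{Y}_t=\emptyset\}$. $C_{\{v_1,v_2\}}$ denotes $\mathcal{D}_T$ for the process started from $\mathcal{Y}_0=\{v_1,v_2\}$, $\mathcal{D}_0=\emptyset$, so $|C_{\{v_1,v_2\}}|=T$. *)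

theory Defs
  imports Complex_Main
begin

definition pairs :: "nat \<Rightarrow> nat set set" where
  "pairs n = {e. e \<subseteq> {..<n} \<and> card e = 2}"

definition triples :: "nat \<Rightarrow> nat set set" where
  "triples n = {e. e \<subseteq> {..<n} \<and> card e = 3}"

text \<open>Probability of an event P (a predicate on the pair (E2,E3) of edge sets) in
  the random hypergraph G(n,p2,p3): each 2-set present independently with prob. p2,
  each 3-set present independently with prob. p3 (product measure written out).\<close>

definition hyp_weight :: "nat \<Rightarrow> real \<Rightarrow> real \<Rightarrow> nat set set \<Rightarrow> nat set set \<Rightarrow> real" where
  "hyp_weight n p2 p3 E2 E3 =
     p2 ^ card E2 * (1 - p2) ^ (card (pairs n) - card E2) *
     p3 ^ card E3 * (1 - p3) ^ (card (triples n) - card E3)"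

definition hyp_prob :: "nat \<Rightarrow> real \<Rightarrow> real \<Rightarrow> (nat set set \<Rightarrow> nat set set \<Rightarrow> bool) \<Rightarrow> real" where
  "hyp_prob n p2 p3 P =
     (\<Sum>E2\<in>Pow (pairs n). \<Sum>E3\<in>Pow (triples n).
        if P E2 E3 then hyp_weight n p2 p3 E2 E3 else 0)"

text \<open>One step of the propagation process on state (Y_t, D_t). The active vertex
  v_t is chosen as the minimum of Y_t (the final set does not depend on the choice).\<close>

definition prop_step :: "nat \<Rightarrow> nat set set \<Rightarrow> nat set set \<Rightarrow> nat set \<times> nat set \<Rightarrow> nat set \<times> nat set" where
  "prop_step n E2 E3 = (\<lambda>(Y, D).
     if Y = {} then (Y, D) else
     (let v = Min Y;
          U = {u \<in> {..<n}. u \<notin> Y \<and> u \<notin> D \<and>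
                 ({v, u} \<in> E2 \<or> (\<exists>w\<in>D. {v, u, w} \<in> E3))}
      in ((Y \<union> U) - {v}, D \<union> {v})))"

definition prop_state :: "nat \<Rightarrow> nat set set \<Rightarrow> nat set set \<Rightarrow> nat set \<Rightarrow> nat \<Rightarrow> nat set \<times> nat set" where
  "prop_state n E2 E3 Y0 t = (prop_step n E2 E3 ^^ t) (Y0, {})"

definition stop_time :: "nat \<Rightarrow> nat set set \<Rightarrow> nat set set \<Rightarrow> nat set \<Rightarrow> nat" where
  "stop_time n E2 E3 Y0 = (LEAST t. fst (prop_state n E2 E3 Y0 t) = {})"

definition component :: "nat \<Rightarrow> nat set set \<Rightarrow> nat set set \<Rightarrow> nat \<Rightarrow> nat \<Rightarrow> nat set" where
  "component n E2 E3 v1 v2 =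
     snd (prop_state n E2 E3 {v1, v2} (stop_time n E2 E3 {v1, v2}))"

definition I_const :: "real \<Rightarrow> real \<Rightarrow> real" where
  "I_const \<epsilon> r = - (1 / r) * (\<epsilon> - \<epsilon>^2 / 2 +
      (if \<epsilon> = 1 then 0 else (1 - \<epsilon>) * ln (1 - \<epsilon>)))"

end

theory Submission
  imports Defs "HOL-Real_Asymp.Real_Asymp"
begin


definition W :: "(nat set \<Rightarrow> real) \<Rightarrow> nat set set \<Rightarrow> nat set set \<Rightarrow> real" where
  "W p E U = (\<Prod>e\<in>E. p e) * (\<Prod>e\<in>U - E. 1 - p e)"

lemma W_nonneg: "(\<forall>e\<in>U. 0 \<le> p e \<and> p e \<le> 1) \<Longrightarrow> E \<subseteq> U \<Longrightarrow> 0 \<le> W p E U"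
  unfolding W_def by (intro mult_nonneg_nonneg prod_nonneg) auto

lemma W_split:
  assumes "finite A" "finite B" "A \<inter> B = {}" "T \<subseteq> A" "S \<subseteq> B"
  shows "W p (T \<union> S) (A \<union> B) = W p T A * W p S B"
proof -
  have f: "finite T" "finite S" using assms finite_subset by blast+
  have 1: "(\<Prod>e\<in>T \<union> S. p e) = (\<Prod>e\<in>T. p e) * (\<Prod>e\<in>S. p e)"
    by (rule prod.union_disjoint) (use f assms in auto)
  have e: "(A \<union> B) - (T \<union> S) = (A - T) \<union> (B - S)" using assms by auto
  have 2: "(\<Prod>e\<in>(A \<union> B) - (T \<union> S). 1 - p e) = (\<Prod>e\<in>A - T. 1 - p e) * (\<Prod>e\<in>B - S. 1 - p e)"
    unfolding e by (rule prod.union_disjoint) (use assms in auto)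
  show ?thesis unfolding W_def 1 2 by (simp add: ac_simps)
qed

lemma bij_Un_Pow:
  assumes "A \<inter> B = {}"
  shows "bij_betw (\<lambda>(T,S). T \<union> S) (Pow A \<times> Pow B) (Pow (A \<union> B))"
proof -
  have "inj_on (\<lambda>(T,S). T \<union> S) (Pow A \<times> Pow B)"
  proof (rule inj_onI, clarify)
    fix T S T' S' assume h: "T \<subseteq> A" "S \<subseteq> B" "T' \<subseteq> A" "S' \<subseteq> B" "T \<union> S = T' \<union> S'"
    have "T = (T \<union> S) \<inter> A" "T' = (T' \<union> S') \<inter> A" "S = (T \<union> S) \<inter> B" "S' = (T' \<union> S') \<inter> B"
      using h assms by auto
    then show "T = T' \<and> S = S'" using h(5) by metis
  qed
  moreover have "(\<lambda>(T,S). T \<union> S) ` (Pow A \<times> Pow B) = Pow (A \<union> B)"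
  proof
    show "(\<lambda>(T,S). T \<union> S) ` (Pow A \<times> Pow B) \<subseteq> Pow (A \<union> B)" by auto
    show "Pow (A \<union> B) \<subseteq> (\<lambda>(T,S). T \<union> S) ` (Pow A \<times> Pow B)"
    proof
      fix E assume "E \<in> Pow (A \<union> B)"
      then have "E = (\<lambda>(T,S). T \<union> S) (E \<inter> A, E \<inter> B)" "(E \<inter> A, E \<inter> B) \<in> Pow A \<times> Pow B" by auto
      then show "E \<in> (\<lambda>(T,S). T \<union> S) ` (Pow A \<times> Pow B)" by blast
    qed
  qed
  ultimately show ?thesis unfolding bij_betw_def by blast
qed

lemma sum_split:
  assumes "finite A" "finite B" "A \<inter> B = {}"
  shows "(\<Sum>E\<in>Pow (A \<union> B). W p E (A \<union> B) * f E)
       = (\<Sum>T\<in>Pow A. \<Sum>S\<in>Pow B. W p T A * W p S B * f (T \<union> S))"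
proof -
  have "(\<Sum>E\<in>Pow (A \<union> B). W p E (A \<union> B) * f E)
      = (\<Sum>x\<in>Pow A \<times> Pow B. (\<lambda>E. W p E (A \<union> B) * f E) ((\<lambda>(T,S). T \<union> S) x))"
    by (rule sum.reindex_bij_betw[symmetric, OF bij_Un_Pow[OF assms(3)]])
  also have "\<dots> = (\<Sum>x\<in>Pow A \<times> Pow B. W p (fst x) A * W p (snd x) B * f (fst x \<union> snd x))"
    by (rule sum.cong) (use assms W_split in auto)
  also have "\<dots> = (\<Sum>T\<in>Pow A. \<Sum>S\<in>Pow B. W p T A * W p S B * f (T \<union> S))"
    by (simp add: sum.cartesian_product case_prod_beta)
  finally show ?thesis .
qed

lemma sum_W_1: "finite U \<Longrightarrow> (\<Sum>E\<in>Pow U. W p E U) = 1"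
  using prod_add[of U p "\<lambda>e. 1 - p e"] unfolding W_def by simp

lemma prod_groups:
  assumes "finite A" "finite N" "\<forall>u\<in>A. G u \<subseteq> N"
    "\<forall>u\<in>A. \<forall>u'\<in>A. u \<noteq> u' \<longrightarrow> G u \<inter> G u' = {}"
  shows "(\<Sum>E\<in>Pow N. W p E N * (\<Prod>u\<in>A. h u (E \<inter> G u)))
       = (\<Prod>u\<in>A. \<Sum>T\<in>Pow (G u). W p T (G u) * h u T)"
  using assms
proof (induction A arbitrary: N rule: finite_induct)
  case empty
  then show ?case using sum_W_1 by simp
next
  case (insert a A N)
  let ?M = "N - G a"
  have N: "N = G a \<union> ?M" using insert by auto
  have fG: "finite (G a)" using insert finite_subset by auto
  have fM: "finite ?M" using insert by auto
  have IH: "(\<Sum>E\<in>Pow ?M. W p E ?M * (\<Prod>u\<in>A. h u (E \<inter> G u)))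
       = (\<Prod>u\<in>A. \<Sum>T\<in>Pow (G u). W p T (G u) * h u T)"
    by (rule insert.IH) (use insert in auto)
  have "(\<Sum>E\<in>Pow N. W p E N * (\<Prod>u\<in>insert a A. h u (E \<inter> G u)))
      = (\<Sum>E\<in>Pow (G a \<union> ?M). W p E (G a \<union> ?M) * (\<Prod>u\<in>insert a A. h u (E \<inter> G u)))"
    using N by simp
  also have "\<dots> = (\<Sum>T\<in>Pow (G a). \<Sum>S\<in>Pow ?M. W p T (G a) * W p S ?M *
                   (\<Prod>u\<in>insert a A. h u ((T \<union> S) \<inter> G u)))"
    by (rule sum_split) (use fG fM in auto)
  also have "\<dots> = (\<Sum>T\<in>Pow (G a). \<Sum>S\<in>Pow ?M. (W p T (G a) * h a T) *
                   (W p S ?M * (\<Prod>u\<in>A. h u (S \<inter> G u))))"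
  proof (intro sum.cong refl)
    fix T S assume T: "T \<in> Pow (G a)" and S: "S \<in> Pow ?M"
    have 1: "(T \<union> S) \<inter> G a = T" using T S by auto
    have 2: "(T \<union> S) \<inter> G u = S \<inter> G u" if "u \<in> A" for u
    proof -
      have "G a \<inter> G u = {}" using insert.prems(3) that insert.hyps(2) by auto
      then show ?thesis using T by auto
    qed
    have "(\<Prod>u\<in>insert a A. h u ((T \<union> S) \<inter> G u)) = h a T * (\<Prod>u\<in>A. h u (S \<inter> G u))"
      using insert.hyps 1 2 by simp
    then show "W p T (G a) * W p S ?M * (\<Prod>u\<in>insert a A. h u ((T \<union> S) \<inter> G u))
        = (W p T (G a) * h a T) * (W p S ?M * (\<Prod>u\<in>A. h u (S \<inter> G u)))" by simp
  qed
  also have "\<dots> = (\<Sum>T\<in>Pow (G a). W p T (G a) * h a T) * (\<Prod>u\<in>A. \<Sum>T\<in>Pow (G u). W p T (G u) * h u T)"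
    by (simp add: sum_product IH[symmetric])
  finally show ?case using insert.hyps by simp
qed

lemma one_minus_prod_le:
  fixes p :: "nat set \<Rightarrow> real"
  assumes "finite G" "\<forall>e\<in>G. 0 \<le> p e \<and> p e \<le> 1"
  shows "1 - (\<Prod>e\<in>G. 1 - p e) \<le> (\<Sum>e\<in>G. p e)"
  using assms
proof (induction G rule: finite_induct)
  case (insert x F)
  have P1: "0 \<le> (\<Prod>e\<in>F. 1 - p e)" using insert.prems by (intro prod_nonneg) simp
  have P2: "(\<Prod>e\<in>F. 1 - p e) \<le> 1" using insert.prems by (simp add: prod_le_1)
  note P = P1 P2
  have "p x * (\<Prod>e\<in>F. 1 - p e) \<le> p x" using P insert.prems
    by (simp add: mult_left_le)
  then show ?case using insert by (simp add: algebra_simps)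
qed simp

lemma group_value:
  fixes p :: "nat set \<Rightarrow> real"
  assumes "finite G" "\<forall>e\<in>G. 0 \<le> p e \<and> p e \<le> 1" "c \<ge> 1"
  shows "(\<Sum>T\<in>Pow G. W p T G * (if T \<noteq> {} then c else 1)) \<le> exp ((c - 1) * (\<Sum>e\<in>G. p e))"
proof -
  have "(\<Sum>T\<in>Pow G. W p T G * (if T \<noteq> {} then c else 1))
      = (\<Sum>T\<in>Pow G. c * W p T G - (if T = {} then (c - 1) * W p T G else 0))"
    by (rule sum.cong) (auto simp: algebra_simps)
  also have "\<dots> = c - (c - 1) * (\<Prod>e\<in>G. 1 - p e)"
    using assms(1) sum_W_1[OF assms(1), of p] by (simp add: sum_subtractf sum_distrib_left[symmetric] W_def)
  also have "\<dots> = 1 + (c - 1) * (1 - (\<Prod>e\<in>G. 1 - p e))" by (simp add: algebra_simps)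
  also have "\<dots> \<le> 1 + (c - 1) * (\<Sum>e\<in>G. p e)"
    using one_minus_prod_le[OF assms(1,2)] assms(3) by (simp add: mult_left_mono)
  also have "\<dots> \<le> exp ((c - 1) * (\<Sum>e\<in>G. p e))" using exp_ge_add_one_self by (simp add: add.commute)
  finally show ?thesis .
qed



definition EU :: "nat \<Rightarrow> nat set set" where "EU n = pairs n \<union> triples n"
definition R :: "nat \<Rightarrow> nat set \<Rightarrow> nat set set" where
  "R n D = {e \<in> EU n. card (e \<inter> D) \<le> (if card e = 2 then 0 else 1)}"
definition pr :: "real \<Rightarrow> real \<Rightarrow> nat set \<Rightarrow> real" where
  "pr p2 p3 e = (if card e = 2 then p2 else p3)"
definition newU :: "nat \<Rightarrow> nat set set \<Rightarrow> nat set set \<Rightarrow> nat set \<Rightarrow> nat set \<Rightarrow> nat set" where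
  "newU n E2 E3 Y D = {u \<in> {..<n}. u \<notin> Y \<and> u \<notin> D \<and>
                 ({Min Y, u} \<in> E2 \<or> (\<exists>w\<in>D. {Min Y, u, w} \<in> E3))}"

lemma step_eq: "Y \<noteq> {} \<Longrightarrow> prop_step n E2 E3 (Y,D) = ((Y \<union> newU n E2 E3 Y D) - {Min Y}, insert (Min Y) D)"
  unfolding prop_step_def newU_def Let_def by simp

lemma step_empty: "prop_step n E2 E3 ({},D) = ({},D)"
  unfolding prop_step_def by simp

primrec spot :: "nat \<Rightarrow> nat \<Rightarrow> (nat \<Rightarrow> real) \<Rightarrow> nat \<Rightarrow> nat set set \<Rightarrow> nat set set \<Rightarrow> nat set \<times> nat set \<Rightarrow> real" where
  "spot n 0 th j E2 E3 st = 0"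
| "spot n (Suc k) th j E2 E3 st = (if fst st = {} then 0 else
      th j * card (newU n E2 E3 (fst st) (snd st)) + spot n k th (Suc j) E2 E3 (prop_step n E2 E3 st))"

lemma finite_pairs: "finite (pairs n)" unfolding pairs_def
  by (rule finite_subset[of _ "Pow {..<n}"]) auto
lemma finite_triples: "finite (triples n)" unfolding triples_def
  by (rule finite_subset[of _ "Pow {..<n}"]) auto
lemma finite_EU: "finite (EU n)" unfolding EU_def using finite_pairs finite_triples by simp
lemma finite_R: "finite (R n D)" unfolding R_def using finite_EU by simp

lemma EU_finite_elem: "e \<in> EU n \<Longrightarrow> finite e"
  unfolding EU_def pairs_def triples_def by (auto intro: card_ge_0_finite)

lemma R_mono: assumes "D \<subseteq> D'" "finite D'" shows "R n D' \<subseteq> R n D"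
proof
  fix e assume e: "e \<in> R n D'"
  then have "finite e" unfolding R_def using EU_finite_elem by auto
  then have "card (e \<inter> D) \<le> card (e \<inter> D')" using assms by (intro card_mono) auto
  then show "e \<in> R n D" using e unfolding R_def by auto
qed

lemma main:
  fixes p2 p3 :: real and th lam :: "nat \<Rightarrow> real"
  assumes p2: "0 \<le> p2" "p2 \<le> 1" and p3: "0 \<le> p3" "p3 \<le> 1"
    and th: "\<forall>j. 0 \<le> th j"
    and lam: "\<forall>j. lam j = real n * (p2 + real j * p3)"
  shows "\<forall>j Y D Ef. Y \<subseteq> {..<n} \<and> D \<subseteq> {..<n} \<and> Y \<inter> D = {} \<and> card D \<le> j \<and> Ef \<inter> R n D = {} \<longrightarrow>
     (\<Sum>E\<in>Pow (R n D). W (pr p2 p3) E (R n D) *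
        exp (spot n k th j ((E \<union> Ef) \<inter> pairs n) ((E \<union> Ef) \<inter> triples n) (Y,D)))
     \<le> (\<Prod>i<k. exp (lam (j+i) * (exp (th (j+i)) - 1)))"
proof (induction k)
  case 0
  show ?case using sum_W_1[OF finite_R] by simp
next
  case (Suc k)
  have prb: "\<forall>e. 0 \<le> pr p2 p3 e \<and> pr p2 p3 e \<le> 1" using p2 p3 unfolding pr_def by auto
  have fac_ge1: "1 \<le> exp (lam i * (exp (th i) - 1))" for i
  proof -
    have "0 \<le> lam i" using lam p2 p3 by simp
    moreover have "0 \<le> exp (th i) - 1" using th by simp
    ultimately show ?thesis by simp
  qed
  show ?case
  proof (intro allI impI)
    fix j Y D Ef
    assume h: "Y \<subseteq> {..<n} \<and> D \<subseteq> {..<n} \<and> Y \<inter> D = {} \<and> card D \<le> j \<and> Ef \<inter> R n D = {}"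
    have Bge1: "1 \<le> (\<Prod>i<Suc k. exp (lam (j+i) * (exp (th (j+i)) - 1)))"
      using fac_ge1 by (intro prod_ge_1) auto
    show "(\<Sum>E\<in>Pow (R n D). W (pr p2 p3) E (R n D) *
        exp (spot n (Suc k) th j ((E \<union> Ef) \<inter> pairs n) ((E \<union> Ef) \<inter> triples n) (Y,D)))
     \<le> (\<Prod>i<Suc k. exp (lam (j+i) * (exp (th (j+i)) - 1)))"
    proof (cases "Y = {}")
      case True
      then show ?thesis using sum_W_1[OF finite_R] Bge1 by simp
    next
      case False
      define v where "v = Min Y"
      define D' where "D' = insert v D"
      define N where "N = R n D - R n D'"
      define A where "A = {u \<in> {..<n}. u \<notin> Y \<and> u \<notin> D}"
      define G where "G u = insert {v,u} ((\<lambda>w. {v,u,w}) ` D)" for u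
      define c where "c = exp (th j)"
      have finY: "finite Y" and finD: "finite D" using h finite_subset by blast+
      have vY: "v \<in> Y" unfolding v_def using False finY by simp
      have vn: "v < n" and vD: "v \<notin> D" using vY h by auto
      have finD': "finite D'" unfolding D'_def using finD by simp
      have RR: "R n D' \<subseteq> R n D" unfolding D'_def by (rule R_mono) (use finD in auto)
      have RDeq: "R n D = N \<union> R n D'" and disj: "N \<inter> R n D' = {}" using RR unfolding N_def by auto
      have finN: "finite N" unfolding N_def using finite_R by simp
      have finA: "finite A" unfolding A_def by simp
      have cardA: "card A \<le> n" unfolding A_def using card_mono[of "{..<n}" "{u \<in> {..<n}. u \<notin> Y \<and> u \<notin> D}"] by auto
      have pairI: "{v,u} \<in> pairs n" if "u \<in> A" for u
      proof -
        have "v \<noteq> u" using that vY unfolding A_def by auto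
        then show ?thesis using that vn unfolding A_def pairs_def by auto
      qed
      have trI: "{v,u,w} \<in> triples n" if "u \<in> A" "w \<in> D" for u w
        using that vn vY vD h unfolding A_def triples_def by (auto simp: card_insert_if)
      have GN: "G u \<subseteq> N" if u: "u \<in> A" for u
      proof
        fix e assume "e \<in> G u"
        then consider "e = {v,u}" | w where "w \<in> D" "e = {v,u,w}" unfolding G_def by auto
        then show "e \<in> N"
        proof cases
          case 1
          have c2: "card e = 2" using pairI[OF u] 1 unfolding pairs_def by simp
          have "e \<inter> D = {}" using 1 u vD unfolding A_def by auto
          moreover have "e \<inter> D' = {v}" using 1 u vD unfolding A_def D'_def by auto
          ultimately show ?thesis using c2 pairI[OF u] 1
            unfolding N_def R_def EU_def by auto
        next
          case 2
          have c3: "card e = 3" using trI[OF u 2(1)] 2 unfolding triples_def by simp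
          have "e \<inter> D = {w}" using 2 u vD unfolding A_def by auto
          moreover have "e \<inter> D' = {v,w}" using 2 u vD unfolding A_def D'_def by auto
          moreover have "v \<noteq> w" using 2 vD by auto
          ultimately show ?thesis using c3 trI[OF u 2(1)] 2
            unfolding N_def R_def EU_def by auto
        qed
      qed
      have Gmem: "e \<in> G u \<Longrightarrow> u \<in> e" for e u unfolding G_def by auto
      have Gdisj: "\<forall>u\<in>A. \<forall>u'\<in>A. u \<noteq> u' \<longrightarrow> G u \<inter> G u' = {}"
      proof (intro ballI impI)
        fix u u' assume u: "u \<in> A" "u' \<in> A" "u \<noteq> u'"
        show "G u \<inter> G u' = {}"
        proof (rule ccontr)
          assume "G u \<inter> G u' \<noteq> {}"
          then obtain e where e: "e \<in> G u" "e \<in> G u'" by blast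
          have "u \<in> e" using Gmem e(1) .
          moreover have "e \<subseteq> insert v (insert u' D)" using e(2) unfolding G_def by auto
          ultimately show False using u vY unfolding A_def by auto
        qed
      qed
      define Uof where "Uof E1 = {u \<in> A. E1 \<inter> G u \<noteq> {}}" for E1
      have keyU: "newU n ((E1 \<union> E2 \<union> Ef) \<inter> pairs n) ((E1 \<union> E2 \<union> Ef) \<inter> triples n) Y D = Uof E1"
        if E1: "E1 \<subseteq> N" and E2: "E2 \<subseteq> R n D'" for E1 E2
      proof -
        have mem: "e \<in> (E1 \<union> E2 \<union> Ef) \<longleftrightarrow> e \<in> E1" if "e \<in> N" for e
          using that E2 h disj RDeq by auto
        have "u \<in> newU n ((E1 \<union> E2 \<union> Ef) \<inter> pairs n) ((E1 \<union> E2 \<union> Ef) \<inter> triples n) Y D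
             \<longleftrightarrow> u \<in> Uof E1" for u
        proof (cases "u \<in> A")
          case True
          have "{v,u} \<in> N" "\<And>w. w \<in> D \<Longrightarrow> {v,u,w} \<in> N" using GN[OF True] unfolding G_def by auto
          then show ?thesis using True mem pairI[OF True] trI[OF True]
            unfolding newU_def Uof_def v_def[symmetric] G_def A_def by auto
        next
          case False
          then show ?thesis unfolding newU_def Uof_def A_def by auto
        qed
        then show ?thesis by blast
      qed
      define st' where "st' E1 = ((Y \<union> Uof E1) - {v}, D')" for E1
      define B' where "B' = (\<Prod>i<k. exp (lam (Suc j+i) * (exp (th (Suc j+i)) - 1)))"
      have UA: "Uof E1 \<subseteq> A" for E1 unfolding Uof_def by auto
      have inner: "(\<Sum>E2\<in>Pow (R n D'). W (pr p2 p3) E2 (R n D') *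
          exp (spot n k th (Suc j) ((E2 \<union> (E1 \<union> Ef)) \<inter> pairs n) ((E2 \<union> (E1 \<union> Ef)) \<inter> triples n) (st' E1)))
          \<le> B'" if E1: "E1 \<subseteq> N" for E1
      proof -
        have "(Y \<union> Uof E1) - {v} \<subseteq> {..<n}" using h UA[of E1] unfolding A_def by auto
        moreover have "D' \<subseteq> {..<n}" using h vn unfolding D'_def by auto
        moreover have "((Y \<union> Uof E1) - {v}) \<inter> D' = {}" using h UA[of E1] unfolding A_def D'_def by auto
        moreover have "card D' \<le> Suc j" using h finD unfolding D'_def by (simp add: card_insert_if)
        moreover have "(E1 \<union> Ef) \<inter> R n D' = {}" using E1 disj h RR by auto
        ultimately show ?thesis using Suc.IH unfolding B'_def st'_def by blast
      qed
      have step1: "\<And>E1 E2. E1 \<subseteq> N \<Longrightarrow> E2 \<subseteq> R n D' \<Longrightarrow>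
          exp (spot n (Suc k) th j ((E1 \<union> E2 \<union> Ef) \<inter> pairs n) ((E1 \<union> E2 \<union> Ef) \<inter> triples n) (Y,D))
          = exp (th j * card (Uof E1)) *
            exp (spot n k th (Suc j) ((E2 \<union> (E1 \<union> Ef)) \<inter> pairs n) ((E2 \<union> (E1 \<union> Ef)) \<inter> triples n) (st' E1))"
      proof -
        fix E1 E2 assume E: "E1 \<subseteq> N" "E2 \<subseteq> R n D'"
        have e: "E2 \<union> (E1 \<union> Ef) = E1 \<union> E2 \<union> Ef" by auto
        show "?thesis E1 E2"
          using keyU[OF E] False unfolding e
          by (simp add: step_eq st'_def D'_def v_def exp_add)
      qed
      have Wn: "\<And>E. 0 \<le> W (pr p2 p3) E N" using prb unfolding W_def
        by (intro mult_nonneg_nonneg prod_nonneg) auto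
      have Wn2: "\<And>E. 0 \<le> W (pr p2 p3) E (R n D')" using prb unfolding W_def
        by (intro mult_nonneg_nonneg prod_nonneg) auto
      have "(\<Sum>E\<in>Pow (R n D). W (pr p2 p3) E (R n D) *
        exp (spot n (Suc k) th j ((E \<union> Ef) \<inter> pairs n) ((E \<union> Ef) \<inter> triples n) (Y,D)))
        = (\<Sum>E1\<in>Pow N. \<Sum>E2\<in>Pow (R n D'). W (pr p2 p3) E1 N * W (pr p2 p3) E2 (R n D') *
        exp (spot n (Suc k) th j ((E1 \<union> E2 \<union> Ef) \<inter> pairs n) ((E1 \<union> E2 \<union> Ef) \<inter> triples n) (Y,D)))"
        unfolding RDeq by (rule sum_split[OF finN finite_R disj])
      also have "\<dots> = (\<Sum>E1\<in>Pow N. W (pr p2 p3) E1 N * exp (th j * card (Uof E1)) *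
         (\<Sum>E2\<in>Pow (R n D'). W (pr p2 p3) E2 (R n D') *
          exp (spot n k th (Suc j) ((E2 \<union> (E1 \<union> Ef)) \<inter> pairs n) ((E2 \<union> (E1 \<union> Ef)) \<inter> triples n) (st' E1))))"
        apply (rule sum.cong[OF refl])
        apply (subst sum_distrib_left)
        apply (rule sum.cong[OF refl])
        apply (subst step1)
          apply auto[2]
        apply (simp only: ac_simps)
        done
      also have "\<dots> \<le> (\<Sum>E1\<in>Pow N. W (pr p2 p3) E1 N * exp (th j * card (Uof E1)) * B')"
        by (intro sum_mono mult_left_mono inner) (use Wn in auto)
      also have "\<dots> = (\<Sum>E1\<in>Pow N. W (pr p2 p3) E1 N * (\<Prod>u\<in>A. (\<lambda>u T. if T \<noteq> {} then c else 1) u (E1 \<inter> G u))) * B'"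
      proof -
        have "exp (th j * card (Uof E1)) = (\<Prod>u\<in>A. (\<lambda>u T. if T \<noteq> {} then c else 1) u (E1 \<inter> G u))" for E1
        proof -
          have "(\<Prod>u\<in>A. (\<lambda>u T. if T \<noteq> {} then c else 1) u (E1 \<inter> G u)) = (\<Prod>u\<in>Uof E1. c)"
            unfolding Uof_def by (subst prod.inter_filter[OF finA]) simp
          also have "\<dots> = c ^ card (Uof E1)" by simp
          finally show ?thesis unfolding c_def by (simp add: exp_of_nat_mult[symmetric] ac_simps)
        qed
        then show ?thesis by (simp add: sum_distrib_right)
      qed
      also have "\<dots> = (\<Prod>u\<in>A. \<Sum>T\<in>Pow (G u). W (pr p2 p3) T (G u) * (if T \<noteq> {} then c else 1)) * B'"
        by (subst prod_groups[OF finA finN]) (use GN Gdisj in auto)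
      also have "\<dots> \<le> (\<Prod>u\<in>A. exp ((c - 1) * (p2 + real j * p3))) * B'"
      proof (intro mult_right_mono prod_mono conjI)
        show "0 \<le> B'" unfolding B'_def by (intro prod_nonneg) auto
        fix u assume u: "u \<in> A"
        have finG: "finite (G u)" unfolding G_def using finD by simp
        have c1: "1 \<le> c" unfolding c_def using th by simp
        show "0 \<le> (\<Sum>T\<in>Pow (G u). W (pr p2 p3) T (G u) * (if T \<noteq> {} then c else 1))"
          using c1 prb unfolding W_def by (intro sum_nonneg mult_nonneg_nonneg prod_nonneg) auto
        have "(\<Sum>e\<in>G u. pr p2 p3 e) \<le> p2 + real j * p3"
        proof -
          have nin: "{v,u} \<notin> (\<lambda>w. {v,u,w}) ` D"
          proof
            assume "{v,u} \<in> (\<lambda>w. {v,u,w}) ` D"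
            then obtain w where w: "w \<in> D" "{v,u} = {v,u,w}" by auto
            then have "w \<in> {v,u}" by auto
            then show False using u vD w(1) unfolding A_def by auto
          qed
          have "(\<Sum>e\<in>G u. pr p2 p3 e) = pr p2 p3 {v,u} + (\<Sum>e\<in>(\<lambda>w. {v,u,w}) ` D. pr p2 p3 e)"
            unfolding G_def using nin finD by simp
          also have "pr p2 p3 {v,u} = p2" using pairI[OF u] unfolding pairs_def pr_def by simp
          also have "(\<Sum>e\<in>(\<lambda>w. {v,u,w}) ` D. pr p2 p3 e) \<le> (\<Sum>w\<in>D. pr p2 p3 {v,u,w})"
            using sum_image_le[OF finD, of "pr p2 p3" "\<lambda>w. {v,u,w}"] prb by (simp add: o_def)
          also have "(\<Sum>w\<in>D. pr p2 p3 {v,u,w}) = (\<Sum>w\<in>D. p3)"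
            by (rule sum.cong) (use trI[OF u] in \<open>auto simp: triples_def pr_def\<close>)
          also have "\<dots> = real (card D) * p3" by simp
          also have "\<dots> \<le> real j * p3" using h p3 by (simp add: mult_right_mono)
          finally show ?thesis by simp
        qed
        then have "exp ((c - 1) * (\<Sum>e\<in>G u. pr p2 p3 e)) \<le> exp ((c - 1) * (p2 + real j * p3))"
          using c1 by (simp add: mult_left_mono)
        then show "(\<Sum>T\<in>Pow (G u). W (pr p2 p3) T (G u) * (if T \<noteq> {} then c else 1)) \<le> exp ((c - 1) * (p2 + real j * p3))"
          using group_value[OF finG _ c1, of "pr p2 p3"] prb by (meson order_trans)
      qed
      also have "\<dots> = exp ((c - 1) * (p2 + real j * p3)) ^ card A * B'" by simp
      also have "\<dots> = exp (real (card A) * ((c - 1) * (p2 + real j * p3))) * B'"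
        by (simp add: exp_of_nat_mult)
      also have "\<dots> \<le> exp (lam j * (exp (th j) - 1)) * B'"
      proof (intro mult_right_mono)
        show "0 \<le> B'" unfolding B'_def by (intro prod_nonneg) auto
        have "0 \<le> (c - 1) * (p2 + real j * p3)" unfolding c_def using th p2 p3 by simp
        then have "real (card A) * ((c - 1) * (p2 + real j * p3)) \<le> real n * ((c - 1) * (p2 + real j * p3))"
          using cardA by (simp add: mult_right_mono)
        also have "\<dots> = lam j * (exp (th j) - 1)" using lam unfolding c_def by simp
        finally show "exp (real (card A) * ((c - 1) * (p2 + real j * p3))) \<le> exp (lam j * (exp (th j) - 1))"
          by simp
      qed
      also have "\<dots> = (\<Prod>i<Suc k. exp (lam (j+i) * (exp (th (j+i)) - 1)))"
        unfolding B'_def by (simp add: prod.lessThan_Suc_shift del: prod.lessThan_Suc)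
      finally show ?thesis .
    qed
  qed
qed



lemma snd_step: "snd (prop_step n E2 E3 st) = (if fst st = {} then snd st else insert (Min (fst st)) (snd st))"
  by (cases st) (simp add: prop_step_def Let_def)

lemma card_D_le: "finite (snd ((prop_step n E2 E3 ^^ t) s)) \<and> card (snd ((prop_step n E2 E3 ^^ t) s)) \<le> t + card (snd s)
   \<or> \<not> finite (snd s)"
proof (induction t)
  case (Suc t)
  then show ?case by (auto simp: snd_step card_insert_if)
qed simp

lemma card_D_le': "card (snd (prop_state n E2 E3 Y0 t)) \<le> t"
  using card_D_le[where t=t and s="(Y0, {})"] unfolding prop_state_def by simp

lemma event_surv:
  assumes "real (card (component n E2 E3 v1 v2)) \<ge> K" "real k < K"
  shows "\<forall>i\<le>k. fst (prop_state n E2 E3 {v1,v2} i) \<noteq> {}"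
proof (cases "\<exists>t. fst (prop_state n E2 E3 {v1,v2} t) = {}")
  case True
  define T where "T = stop_time n E2 E3 {v1,v2}"
  have "card (component n E2 E3 v1 v2) \<le> T" unfolding component_def T_def by (rule card_D_le')
  then have "k < T" using assms by linarith
  show ?thesis
  proof (intro allI impI)
    fix i assume "i \<le> k"
    then have "i < T" using \<open>k < T\<close> by simp
    then show "fst (prop_state n E2 E3 {v1, v2} i) \<noteq> {}"
      unfolding T_def stop_time_def by (rule not_less_Least)
  qed
next
  case False
  then show ?thesis by auto
qed

lemma surv:
  fixes th :: "nat \<Rightarrow> real"
  assumes th: "\<forall>j. 0 \<le> th j" and anti: "\<forall>j. th (Suc j) \<le> th j"
  shows "\<forall>j Y D. Y \<subseteq> {..<n} \<and> (\<forall>i\<le>k. fst ((prop_step n E2 E3 ^^ i) (Y,D)) \<noteq> {}) \<longrightarrow>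
     spot n k th j E2 E3 (Y,D) \<ge> (\<Sum>i<k. th (j+i)) - th j * (real (card Y) - 1)"
proof (induction k)
  case 0
  show ?case
  proof (intro allI impI)
    fix j Y D assume h: "Y \<subseteq> {..<n} \<and> (\<forall>i\<le>0. fst ((prop_step n E2 E3 ^^ i) (Y,D)) \<noteq> {})"
    then have "Y \<noteq> {}" "finite Y" using finite_subset by auto
    then have "1 \<le> real (card Y)" by (simp add: Suc_leI card_gt_0_iff)
    then show "spot n 0 th j E2 E3 (Y,D) \<ge> (\<Sum>i<0. th (j+i)) - th j * (real (card Y) - 1)"
      using th by simp
  qed
next
  case (Suc k)
  show ?case
  proof (intro allI impI)
    fix j Y D assume h: "Y \<subseteq> {..<n} \<and> (\<forall>i\<le>Suc k. fst ((prop_step n E2 E3 ^^ i) (Y,D)) \<noteq> {})"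
    then have Yne: "Y \<noteq> {}" and finY: "finite Y" using finite_subset by (force, blast)
    define U where "U = newU n E2 E3 Y D"
    define v where "v = Min Y"
    define Y' where "Y' = (Y \<union> U) - {v}"
    have vY: "v \<in> Y" unfolding v_def using Yne finY by simp
    have st: "prop_step n E2 E3 (Y,D) = (Y', insert v D)"
      unfolding Y'_def U_def v_def by (rule step_eq[OF Yne])
    have UY: "U \<inter> Y = {}" "U \<subseteq> {..<n}" unfolding U_def newU_def by auto
    have finU: "finite U" using UY finite_subset by blast
    have cY': "card Y' = card Y + card U - 1"
    proof -
      have "card (Y \<union> U) = card Y + card U" using card_Un_disjoint[OF finY finU] UY by auto
      then show ?thesis unfolding Y'_def using vY finY finU by (simp add: card_Diff_singleton)
    qed
    have Y'n: "Y' \<subseteq> {..<n}" using h UY unfolding Y'_def by auto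
    have surv': "\<forall>i\<le>k. fst ((prop_step n E2 E3 ^^ i) (Y', insert v D)) \<noteq> {}"
    proof (intro allI impI)
      fix i assume "i \<le> k"
      then have "fst ((prop_step n E2 E3 ^^ Suc i) (Y,D)) \<noteq> {}" using h by blast
      then show "fst ((prop_step n E2 E3 ^^ i) (Y', insert v D)) \<noteq> {}"
        by (simp only: funpow_Suc_right o_apply st) simp
    qed
    have IH: "spot n k th (Suc j) E2 E3 (Y', insert v D) \<ge> (\<Sum>i<k. th (Suc j+i)) - th (Suc j) * (real (card Y') - 1)"
      using Suc.IH Y'n surv' by blast
    have Y'ne: "Y' \<noteq> {}" using surv'[rule_format, of 0] by simp
    have finY': "finite Y'" using Y'n finite_subset by blast
    have cY'1: "1 \<le> real (card Y')" using Y'ne finY' by (simp add: Suc_leI card_gt_0_iff)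
    have cYr: "real (card Y') = real (card Y) + real (card U) - 1"
    proof -
      have "0 < card Y" using Yne finY by (simp add: card_gt_0_iff)
      then have "1 \<le> card Y + card U" by simp
      then show ?thesis using cY' by (simp add: of_nat_diff)
    qed
    have spot_eq: "spot n (Suc k) th j E2 E3 (Y,D) = th j * card U + spot n k th (Suc j) E2 E3 (Y', insert v D)"
      using Yne st unfolding U_def by simp
    have mono: "0 \<le> (th j - th (Suc j)) * (real (card Y') - 1)"
      using anti cY'1 by simp
    have "(\<Sum>i<Suc k. th (j+i)) = th j + (\<Sum>i<k. th (Suc j+i))"
      by (simp add: sum.lessThan_Suc_shift del: sum.lessThan_Suc)
    then show "spot n (Suc k) th j E2 E3 (Y,D) \<ge> (\<Sum>i<Suc k. th (j+i)) - th j * (real (card Y) - 1)"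
      using IH mono spot_eq cYr by (simp add: algebra_simps)
  qed
qed

lemma disj_pt: "pairs n \<inter> triples n = {}" unfolding pairs_def triples_def by auto

lemma hyp_prob_eq:
  "hyp_prob n p2 p3 P = (\<Sum>E\<in>Pow (EU n). W (pr p2 p3) E (EU n) * (if P (E \<inter> pairs n) (E \<inter> triples n) then 1 else 0))"
proof -
  have "(\<Sum>E\<in>Pow (EU n). W (pr p2 p3) E (EU n) * (if P (E \<inter> pairs n) (E \<inter> triples n) then 1 else 0))
    = (\<Sum>T\<in>Pow (pairs n). \<Sum>S\<in>Pow (triples n). W (pr p2 p3) T (pairs n) * W (pr p2 p3) S (triples n) *
         (if P ((T \<union> S) \<inter> pairs n) ((T \<union> S) \<inter> triples n) then 1 else 0))"
    unfolding EU_def by (rule sum_split[OF finite_pairs finite_triples disj_pt])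
  also have "\<dots> = hyp_prob n p2 p3 P"
    unfolding hyp_prob_def
  proof (intro sum.cong refl)
    fix T S assume T: "T \<in> Pow (pairs n)" and S: "S \<in> Pow (triples n)"
    have 1: "(T \<union> S) \<inter> pairs n = T" "(T \<union> S) \<inter> triples n = S" using T S disj_pt by auto
    have fT: "finite T" "finite S" using T S finite_pairs finite_triples finite_subset by blast+
    have "W (pr p2 p3) T (pairs n) = p2 ^ card T * (1 - p2) ^ (card (pairs n) - card T)"
    proof -
      have "(\<Prod>e\<in>T. pr p2 p3 e) = (\<Prod>e\<in>T. p2)" using T by (intro prod.cong) (auto simp: pr_def pairs_def)
      moreover have "(\<Prod>e\<in>pairs n - T. 1 - pr p2 p3 e) = (\<Prod>e\<in>pairs n - T. 1 - p2)"
        by (intro prod.cong) (auto simp: pr_def pairs_def)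
      ultimately show ?thesis unfolding W_def using T fT finite_pairs by (simp add: card_Diff_subset)
    qed
    moreover have "W (pr p2 p3) S (triples n) = p3 ^ card S * (1 - p3) ^ (card (triples n) - card S)"
    proof -
      have "(\<Prod>e\<in>S. pr p2 p3 e) = (\<Prod>e\<in>S. p3)" using S by (intro prod.cong) (auto simp: pr_def triples_def)
      moreover have "(\<Prod>e\<in>triples n - S. 1 - pr p2 p3 e) = (\<Prod>e\<in>triples n - S. 1 - p3)"
        by (intro prod.cong) (auto simp: pr_def triples_def)
      ultimately show ?thesis unfolding W_def using S fT finite_triples by (simp add: card_Diff_subset)
    qed
    ultimately show "W (pr p2 p3) T (pairs n) * W (pr p2 p3) S (triples n) *
         (if P ((T \<union> S) \<inter> pairs n) ((T \<union> S) \<inter> triples n) then 1 else 0)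
       = (if P T S then hyp_weight n p2 p3 T S else 0)"
      unfolding 1 hyp_weight_def by simp
  qed
  finally show ?thesis by simp
qed

lemma R_empty: "R n {} = EU n" unfolding R_def by auto

lemma prob_bound:
  fixes th lam :: "nat \<Rightarrow> real"
  assumes p2: "0 \<le> p2" "p2 \<le> 1" and p3: "0 \<le> p3" "p3 \<le> 1"
    and th: "\<forall>j. 0 \<le> th j" and anti: "\<forall>j. th (Suc j) \<le> th j"
    and lam: "\<forall>j. lam j = real n * (p2 + real j * p3)"
    and v: "v1 < n" "v2 < n" "v1 \<noteq> v2"
    and Q: "\<And>E2 E3. P E2 E3 \<Longrightarrow> (\<forall>i\<le>k. fst (prop_state n E2 E3 {v1,v2} i) \<noteq> {})"
  shows "hyp_prob n p2 p3 P \<le> exp (th 0 - (\<Sum>i<k. th i) + (\<Sum>i<k. lam i * (exp (th i) - 1)))"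
proof -
  define M where "M = (\<Sum>i<k. th i) - th 0"
  let ?sp = "\<lambda>E. spot n k th 0 (E \<inter> pairs n) (E \<inter> triples n) ({v1,v2},{})"
  have prb: "\<forall>e. 0 \<le> pr p2 p3 e \<and> pr p2 p3 e \<le> 1" using p2 p3 unfolding pr_def by auto
  have ind: "(if P (E \<inter> pairs n) (E \<inter> triples n) then 1 else 0) \<le> exp (?sp E - M)" for E
  proof (cases "P (E \<inter> pairs n) (E \<inter> triples n)")
    case True
    have "\<forall>i\<le>k. fst ((prop_step n (E \<inter> pairs n) (E \<inter> triples n) ^^ i) ({v1,v2},{})) \<noteq> {}"
      using Q[OF True] unfolding prop_state_def .
    moreover have "{v1,v2} \<subseteq> {..<n}" using v by auto
    ultimately have "?sp E \<ge> (\<Sum>i<k. th (0+i)) - th 0 * (real (card {v1,v2}) - 1)"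
      using surv[OF th anti, of n k "E \<inter> pairs n" "E \<inter> triples n"] by blast
    then have "?sp E \<ge> M" using v unfolding M_def by simp
    then show ?thesis using True by simp
  qed simp
  have "hyp_prob n p2 p3 P \<le> (\<Sum>E\<in>Pow (EU n). W (pr p2 p3) E (EU n) * exp (?sp E - M))"
    unfolding hyp_prob_eq
    by (intro sum_mono mult_left_mono ind W_nonneg) (use prb in auto)
  also have "\<dots> = exp (- M) * (\<Sum>E\<in>Pow (EU n). W (pr p2 p3) E (EU n) * exp (?sp E))"
    by (simp add: sum_distrib_left exp_diff divide_inverse exp_minus ac_simps)
  also have "\<dots> \<le> exp (- M) * (\<Prod>i<k. exp (lam (0+i) * (exp (th (0+i)) - 1)))"
  proof (intro mult_left_mono)
    have "{v1,v2} \<subseteq> {..<n}" using v by auto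
    then show "(\<Sum>E\<in>Pow (EU n). W (pr p2 p3) E (EU n) * exp (?sp E)) \<le> (\<Prod>i<k. exp (lam (0+i) * (exp (th (0+i)) - 1)))"
      using main[OF p2 p3 th lam, where k=k, rule_format, where j=0 and Y="{v1,v2}" and D="{}" and Ef="{}"] unfolding R_empty by simp
  qed simp
  also have "\<dots> = exp (th 0 - (\<Sum>i<k. th i) + (\<Sum>i<k. lam i * (exp (th i) - 1)))"
    unfolding M_def by (simp add: exp_sum[symmetric] exp_add)
  finally show ?thesis .
qed



definition FF :: "real \<Rightarrow> real" where "FF x = x * ln x - x^2 / 2"

lemma aux_sq: "(1 - m^2) / 2 \<le> 1 - (m::real)"
proof -
  have "0 \<le> (1 - m)^2" by simp
  then have "0 \<le> 1 - 2 * m + m * m" by (simp add: power2_eq_square algebra_simps)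
  then show ?thesis by (simp add: power2_eq_square)
qed

lemma f_mono:
  fixes a z :: real assumes "0 < a" "a \<le> z" "z \<le> 1"
  shows "1 - a + ln a \<le> 1 - z + ln z"
proof -
  have "ln (a / z) \<le> a / z - 1" using assms by (intro ln_le_minus_one) auto
  then have "ln a - ln z \<le> a / z - 1" using assms by (simp add: ln_div)
  moreover have "a / z - 1 \<le> a - z"
  proof -
    have "a / z - 1 = (a - z) / z" using assms by (simp add: field_simps)
    also have "\<dots> \<le> (a - z)"
    proof -
      have "(a - z) * (1 - z) \<le> 0" using assms by (intro mult_nonpos_nonneg) auto
      moreover have "(a - z) * (1 - z) = (a - z) - (a - z) * z" by (simp add: algebra_simps)
      ultimately have "a - z \<le> (a - z) * z" by linarith
      then show ?thesis using assms pos_divide_le_eq[of z "a - z" "a - z"] by simp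
    qed
    finally show ?thesis .
  qed
  ultimately show ?thesis by simp
qed

lemma tangent:
  fixes a b :: real assumes "0 < a" "a \<le> b" "b \<le> 1"
  shows "(1 - a + ln a) * (b - a) \<le> FF b - FF a"
proof (cases "a = b")
  case True then show ?thesis by simp
next
  case False
  then have ab: "a < b" using assms by simp
  have "\<And>x. a \<le> x \<Longrightarrow> x \<le> b \<Longrightarrow> DERIV FF x :> (ln x + 1 - x)"
  proof -
    fix x assume "a \<le> x" "x \<le> b"
    then have "0 < x" using assms by simp
    then show "DERIV FF x :> (ln x + 1 - x)" unfolding FF_def
      by (auto intro!: derivative_eq_intros simp: field_simps power2_eq_square)
  qed
  from MVT2[OF ab this] obtain z where z: "a < z" "z < b" "FF b - FF a = (b - a) * (ln z + 1 - z)" by blast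
  have "1 - a + ln a \<le> 1 - z + ln z" using f_mono[of a z] z assms by simp
  then have "(1 - a + ln a) * (b - a) \<le> (1 - z + ln z) * (b - a)" using ab by (intro mult_right_mono) auto
  moreover have "(1 - z + ln z) * (b - a) = (b - a) * (ln z + 1 - z)" by (simp add: algebra_simps)
  ultimately show ?thesis using z(3) by linarith
qed

lemma numeric:
  fixes \<epsilon> r L :: real and k :: nat
  assumes e: "0 < \<epsilon>" "\<epsilon> \<le> 1" and r: "0 < r" and L: "r / \<epsilon> \<le> L"
    and k: "k = nat \<lfloor>\<epsilon> * L / r\<rfloor> - 1"
  defines "lam \<equiv> \<lambda>j. (1 - \<epsilon>) + r * real j / L"
    and "mu \<equiv> \<lambda>j. (1 - \<epsilon>) + r * (real j + 1) / L"
  defines "th \<equiv> \<lambda>j. - ln (min 1 (mu j))"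
  shows "th 0 - (\<Sum>i<k. th i) + (\<Sum>i<k. lam i * (exp (th i) - 1))
         \<le> L * I_const \<epsilon> r + 2 * ln (L / r) + 4"
proof -
  have "0 < r / \<epsilon>" using r e by simp
  then have L0: "0 < L" using L by linarith
  have "r \<le> r / \<epsilon>" using e r by (simp add: le_divide_eq)
  then have rL: "r \<le> L" using L by linarith
  define h where "h = r / L"
  define a where "a = 1 - \<epsilon>"
  have h0: "0 < h" unfolding h_def using r L0 by simp
  have h1: "h \<le> 1" unfolding h_def using rL L0 by (simp add: divide_le_eq)
  have hLr: "L * h = r" unfolding h_def using L0 by simp
  have hL: "L / r * h = 1" unfolding h_def using r L0 by simp
  have a0: "0 \<le> a" "a \<le> 1" unfolding a_def using e by auto
  have eLr: "1 \<le> \<epsilon> * L / r" using L e r by (simp add: field_simps)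
  have fl1: "1 \<le> \<lfloor>\<epsilon> * L / r\<rfloor>" using eLr by linarith
  have kk: "real (k + 1) = real_of_int \<lfloor>\<epsilon> * L / r\<rfloor>" unfolding k using fl1 by (simp add: of_nat_diff)
  have k1: "real (k + 1) \<le> \<epsilon> * L / r" using kk by linarith
  have k2: "\<epsilon> * L / r - 1 < real (k + 1)" using kk by linarith
  have mu_eq: "mu j = a + h * (real j + 1)" for j unfolding mu_def a_def h_def by simp
  have lam_eq: "lam j = mu j - h" for j unfolding lam_def mu_def h_def by (simp add: distrib_left add_divide_distrib)
  have mu_pos: "0 < mu j" for j unfolding mu_eq using a0 h0 by (simp add: add_nonneg_pos)
  have mu_k: "mu k \<le> 1"
  proof -
    have "h * real (k + 1) \<le> h * (\<epsilon> * L / r)" by (rule mult_left_mono) (use k1 h0 in auto)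
    also have "\<dots> = \<epsilon>" unfolding h_def using r L0 by simp
    finally show ?thesis unfolding mu_eq a_def by (simp add: algebra_simps)
  qed
  have mu_k2: "1 - h < mu k"
  proof -
    have "h * (\<epsilon> * L / r - 1) < h * real (k + 1)" using k2 h0 by simp
    moreover have "h * (\<epsilon> * L / r - 1) = \<epsilon> - h" unfolding h_def using r L0 by (simp add: field_simps)
    ultimately show ?thesis unfolding mu_eq a_def by (simp add: algebra_simps)
  qed
  have mu_mono: "i \<le> j \<Longrightarrow> mu i \<le> mu j" for i j unfolding mu_eq using h0 by simp
  have mu_le1: "i \<le> k \<Longrightarrow> mu i \<le> 1" for i using mu_mono mu_k by (meson order_trans)
  have th_eq: "i \<le> k \<Longrightarrow> th i = - ln (mu i)" for i unfolding th_def using mu_le1 by simp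
  have trm: "- th i + lam i * (exp (th i) - 1) \<le> (1 - mu i + ln (mu i)) + h" if "i < k" for i
  proof -
    have "exp (th i) = 1 / mu i" using th_eq[of i] that mu_pos[of i] by (simp add: exp_minus inverse_eq_divide)
    then have "lam i * (exp (th i) - 1) = lam i / mu i - lam i" by (simp add: algebra_simps)
    also have "lam i / mu i \<le> 1" using mu_pos[of i] h0 unfolding lam_eq by simp
    finally show ?thesis using th_eq[of i] that unfolding lam_eq by simp
  qed
  have sum1: "- (\<Sum>i<k. th i) + (\<Sum>i<k. lam i * (exp (th i) - 1)) \<le> (\<Sum>i<k. 1 - mu i + ln (mu i)) + real k * h"
  proof -
    have "- (\<Sum>i<k. th i) + (\<Sum>i<k. lam i * (exp (th i) - 1)) = (\<Sum>i<k. - th i + lam i * (exp (th i) - 1))"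
      by (simp add: sum.distrib sum_negf sum_subtractf)
    also have "\<dots> \<le> (\<Sum>i<k. (1 - mu i + ln (mu i)) + h)" by (intro sum_mono trm) simp
    also have "\<dots> = (\<Sum>i<k. 1 - mu i + ln (mu i)) + real k * h" by (simp add: sum.distrib)
    finally show ?thesis .
  qed
  have tel: "(\<Sum>i<k. 1 - mu i + ln (mu i)) \<le> L / r * (FF (mu k) - FF (mu 0))"
  proof -
    have "(\<Sum>i<k. 1 - mu i + ln (mu i)) = (\<Sum>i<k. L / r * ((1 - mu i + ln (mu i)) * (mu (Suc i) - mu i)))"
    proof (intro sum.cong refl)
      fix i have d: "mu (Suc i) - mu i = h" unfolding mu_eq by (simp add: algebra_simps)
      show "1 - mu i + ln (mu i) = L / r * ((1 - mu i + ln (mu i)) * (mu (Suc i) - mu i))"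
      proof -
        define X where "X = 1 - mu i + ln (mu i)"
        have "L / r * (X * (mu (Suc i) - mu i)) = L / r * (X * h)" using d by simp
        also have "\<dots> = X * (L * h) / r" by simp
        also have "\<dots> = X" using hLr r by simp
        finally show ?thesis unfolding X_def by simp
      qed
    qed
    also have "\<dots> \<le> (\<Sum>i<k. L / r * (FF (mu (Suc i)) - FF (mu i)))"
    proof (intro sum_mono mult_left_mono)
      fix i assume "i \<in> {..<k}"
      then show "(1 - mu i + ln (mu i)) * (mu (Suc i) - mu i) \<le> FF (mu (Suc i)) - FF (mu i)"
        using tangent[of "mu i" "mu (Suc i)"] mu_pos mu_mono[of i "Suc i"] mu_le1[of "Suc i"] by simp
    qed (use r L0 in simp)
    also have "\<dots> = L / r * (FF (mu k) - FF (mu 0))"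
      by (subst sum_distrib_left[symmetric]) (simp only: sum_lessThan_telescope[of "\<lambda>i. FF (mu i)" k])
    finally show ?thesis .
  qed
  have F1: "FF (mu k) \<le> FF 1 + h"
  proof -
    have "mu k * ln (mu k) \<le> 0" using mu_pos[of k] mu_k by (simp add: mult_nonneg_nonpos)
    moreover have "(1 - (mu k)^2) / 2 \<le> 1 - mu k"
      by (rule aux_sq)
    ultimately show ?thesis using mu_k2 unfolding FF_def by simp
  qed
  have mu0: "mu 0 = a + h" unfolding mu_eq by simp
  have F0: "FF a - FF (mu 0) \<le> a * h + h^2 / 2 - h * ln h"
  proof -
    have 1: "a * ln a \<le> a * ln (a + h)"
    proof (cases "a = 0")
      case False then show ?thesis using a0 h0 by (intro mult_left_mono) auto
    qed simp
    have 2: "ln h \<le> ln (a + h)" using a0 h0 by simp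
    have "FF a - FF (mu 0) = a * ln a - (a + h) * ln (a + h) + a * h + h^2 / 2"
      unfolding FF_def mu0 by (simp add: power2_eq_square algebra_simps)
    also have "\<dots> \<le> a * ln (a + h) - (a + h) * ln (a + h) + a * h + h^2 / 2" using 1 by simp
    also have "\<dots> = - h * ln (a + h) + a * h + h^2 / 2" by (simp add: algebra_simps)
    also have "\<dots> \<le> - h * ln h + a * h + h^2 / 2" using 2 h0 by simp
    finally show ?thesis by simp
  qed
  have th0: "th 0 = - ln (a + h)" using th_eq[of 0] mu0 by simp
  have th0b: "th 0 \<le> ln (L / r)"
  proof -
    have "ln h \<le> ln (a + h)" using a0 h0 by simp
    moreover have "ln (L / r) = - ln h" unfolding h_def using r L0 by (simp add: ln_div)
    ultimately show ?thesis using th0 by simp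
  qed
  have I: "L / r * (FF 1 - FF a) = L * I_const \<epsilon> r"
  proof -
    have e: "FF 1 - FF a = - (\<epsilon> - \<epsilon>^2 / 2 + (if \<epsilon> = 1 then 0 else (1 - \<epsilon>) * ln (1 - \<epsilon>)))"
      unfolding FF_def a_def by (auto simp: power2_eq_square field_simps)
    define S where "S = \<epsilon> - \<epsilon>^2 / 2 + (if \<epsilon> = 1 then 0 else (1 - \<epsilon>) * ln (1 - \<epsilon>))"
    show ?thesis unfolding I_const_def e S_def[symmetric] by simp
  qed
  have kh: "real k * h \<le> \<epsilon>"
  proof -
    have "real k * h \<le> real (k + 1) * h" using h0 by (simp add: mult_right_mono)
    also have "\<dots> \<le> (\<epsilon> * L / r) * h" by (rule mult_right_mono) (use k1 h0 in auto)
    also have "\<dots> = \<epsilon>" unfolding h_def using r L0 by simp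
    finally show ?thesis .
  qed
  have main: "L / r * (FF (mu k) - FF (mu 0)) \<le> L * I_const \<epsilon> r + 1 + a + h / 2 + ln (L / r)"
  proof -
    have "FF (mu k) - FF (mu 0) \<le> (FF 1 - FF a) + (h + a * h + h^2 / 2 - h * ln h)"
      using F1 F0 by simp
    then have "L / r * (FF (mu k) - FF (mu 0)) \<le> L / r * (FF 1 - FF a) + L / r * (h + a * h + h^2 / 2 - h * ln h)"
    proof -
      have "0 \<le> L / r" using r L0 by simp
      from mult_left_mono[OF \<open>FF (mu k) - FF (mu 0) \<le> _\<close> this] show ?thesis
        by (simp only: distrib_left)
    qed
    also have "L / r * (h + a * h + h^2 / 2 - h * ln h) = (L / r * h) * (1 + a + h / 2 - ln h)"
      by (simp add: power2_eq_square algebra_simps)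
    also have "\<dots> = 1 + a + h / 2 - ln h" unfolding hL by simp
    finally have "L / r * (FF (mu k) - FF (mu 0)) \<le> L / r * (FF 1 - FF a) + (1 + a + h / 2 - ln h)" .
    moreover have "- ln h = ln (L / r)" unfolding h_def using r L0 by (simp add: ln_div)
    ultimately show ?thesis unfolding I by simp
  qed
  have "th 0 - (\<Sum>i<k. th i) + (\<Sum>i<k. lam i * (exp (th i) - 1))
     \<le> ln (L / r) + (L / r * (FF (mu k) - FF (mu 0))) + \<epsilon>"
    using sum1 tel kh th0b by simp
  also have "\<dots> \<le> L * I_const \<epsilon> r + 2 * ln (L / r) + 4"
    using main a0 h1 e by simp
  finally show ?thesis .
qed



lemma per_n:
  fixes \<epsilon> r :: real and n v1 v2 :: nat
  assumes e: "0 < \<epsilon>" "\<epsilon> \<le> 1" and r: "0 < r" and n: "2 \<le> n" and L: "r / \<epsilon> \<le> ln (real n)"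
    and v: "v1 < n" "v2 < n" "v1 \<noteq> v2"
  shows "hyp_prob n ((1 - \<epsilon>) / real n) (r / (real n * ln (real n)))
         (\<lambda>E2 E3. real (card (component n E2 E3 v1 v2))
                    \<ge> max 1 (2 * (9 + \<epsilon>) / r) * ln (real n))
       \<le> real n powr (I_const \<epsilon> r + (2 * ln (ln (real n) / r) + 4) / ln (real n))"
proof -
  define L where "L = ln (real n)"
  define p2 where "p2 = (1 - \<epsilon>) / real n"
  define p3 where "p3 = r / (real n * L)"
  define k where "k = nat \<lfloor>\<epsilon> * L / r\<rfloor> - 1"
  define mu where "mu = (\<lambda>j::nat. (1 - \<epsilon>) + r * (real j + 1) / L)"
  define th where "th = (\<lambda>j. - ln (min 1 (mu j)))"
  define lam where "lam = (\<lambda>j::nat. real n * (p2 + real j * p3))"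
  have n0: "0 < real n" using n by simp
  have "0 < r / \<epsilon>" using r e by simp
  then have L0: "0 < L" using L unfolding L_def by linarith
  have "r \<le> r / \<epsilon>" using e r by (simp add: le_divide_eq)
  then have rL: "r \<le> L" using L unfolding L_def by linarith
  have p2: "0 \<le> p2" "p2 \<le> 1" unfolding p2_def using e n by (auto simp: divide_le_eq)
  have nL: "L \<le> real n * L" using n L0 by simp
  have rnL: "r \<le> real n * L" using rL nL by linarith
  have p3: "0 \<le> p3" "p3 \<le> 1" unfolding p3_def using r L0 n0 rnL by (auto simp: divide_le_eq)
  have mu_pos: "0 < mu j" for j unfolding mu_def using e r L0 by (intro add_nonneg_pos) auto
  have th0: "\<forall>j. 0 \<le> th j" unfolding th_def using mu_pos by simp
  have anti: "\<forall>j. th (Suc j) \<le> th j"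
  proof
    fix j
    have "mu j \<le> mu (Suc j)" unfolding mu_def using r L0 by (simp add: divide_right_mono)
    then have "min 1 (mu j) \<le> min 1 (mu (Suc j))" by simp
    moreover have "0 < min 1 (mu j)" using mu_pos by simp
    ultimately show "th (Suc j) \<le> th j" unfolding th_def by simp
  qed
  have lam: "\<forall>j. lam j = real n * (p2 + real j * p3)" unfolding lam_def by simp
  have lam2: "lam j = (1 - \<epsilon>) + r * real j / L" for j
    unfolding lam_def p2_def p3_def using n0 L0 by (simp add: field_simps)
  define K0 where "K0 = max 1 (2 * (9 + \<epsilon>) / r)"
  have kK: "real k < K0 * L"
  proof -
    have x0: "0 \<le> \<epsilon> * L / r" using e L0 r by simp
    have "real k \<le> real (nat \<lfloor>\<epsilon> * L / r\<rfloor>)" unfolding k_def by simp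
    also have "\<dots> = real_of_int \<lfloor>\<epsilon> * L / r\<rfloor>" using x0 by simp
    also have "\<dots> \<le> \<epsilon> * L / r" by simp
    finally have "real k \<le> \<epsilon> * L / r" .
    also have "\<dots> < (2 * (9 + \<epsilon>) / r) * L"
    proof -
      have "\<epsilon> * L < (2 * (9 + \<epsilon>)) * L" using L0 e by (intro mult_strict_right_mono) auto
      then show ?thesis using r by (simp add: divide_strict_right_mono)
    qed
    also have "\<dots> \<le> K0 * L" unfolding K0_def using L0 by (intro mult_right_mono) auto
    finally show ?thesis .
  qed
  have bound: "hyp_prob n p2 p3 (\<lambda>E2 E3. real (card (component n E2 E3 v1 v2)) \<ge> K0 * L)
      \<le> exp (th 0 - (\<Sum>i<k. th i) + (\<Sum>i<k. lam i * (exp (th i) - 1)))"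
  proof (rule prob_bound[OF p2 p3 th0 anti lam v])
    fix E2 E3 assume "real (card (component n E2 E3 v1 v2)) \<ge> K0 * L"
    then show "\<forall>i\<le>k. fst (prop_state n E2 E3 {v1,v2} i) \<noteq> {}"
      by (rule event_surv[OF _ kK])
  qed
  have num: "th 0 - (\<Sum>i<k. th i) + (\<Sum>i<k. lam i * (exp (th i) - 1)) \<le> L * I_const \<epsilon> r + 2 * ln (L / r) + 4"
    using numeric[OF e r L[folded L_def] k_def] unfolding th_def mu_def lam2 .
  define X where "X = I_const \<epsilon> r + (2 * ln (L / r) + 4) / L"
  have pw: "real n powr X = exp (X * L)" unfolding powr_def L_def using n0 by simp
  have XL: "X * L = L * I_const \<epsilon> r + 2 * ln (L / r) + 4"
    unfolding X_def using L0 by (simp add: field_simps)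
  have "hyp_prob n p2 p3 (\<lambda>E2 E3. real (card (component n E2 E3 v1 v2)) \<ge> K0 * L)
      \<le> exp (L * I_const \<epsilon> r + 2 * ln (L / r) + 4)"
    using bound num by (meson exp_le_cancel_iff order_trans)
  also have "\<dots> = real n powr X" unfolding pw XL ..
  finally show ?thesis unfolding p2_def p3_def K0_def X_def L_def .
qed

theorem corollary1:
  fixes \<epsilon> r :: real
  assumes "0 < \<epsilon>" "\<epsilon> \<le> 1" "0 < r"
  shows "\<exists>g :: nat \<Rightarrow> real. g \<longlonglongrightarrow> 0 \<and>
    (\<forall>\<^sub>F n in sequentially. \<forall>v1 v2. v1 < n \<and> v2 < n \<and> v1 \<noteq> v2 \<longrightarrow>
       hyp_prob n ((1 - \<epsilon>) / real n) (r / (real n * ln (real n)))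
         (\<lambda>E2 E3. real (card (component n E2 E3 v1 v2))
                    \<ge> max 1 (2 * (9 + \<epsilon>) / r) * ln (real n))
       \<le> real n powr (I_const \<epsilon> r + g n))"
proof -
  define g where "g = (\<lambda>n::nat. (2 * ln (ln (real n) / r) + 4) / ln (real n))"
  have lim: "g \<longlonglongrightarrow> 0" unfolding g_def using assms(3) by real_asymp
  have ev1: "eventually (\<lambda>n::nat. r / \<epsilon> \<le> ln (real n)) sequentially"
  proof -
    have "filterlim (\<lambda>n::nat. ln (real n)) at_top sequentially"
      by (rule filterlim_compose[OF ln_at_top filterlim_real_sequentially])
    then show ?thesis by (simp add: filterlim_at_top)
  qed
  have ev2: "eventually (\<lambda>n::nat. 2 \<le> n) sequentially" by (rule eventually_ge_at_top)
  have "\<forall>\<^sub>F n in sequentially. \<forall>v1 v2. v1 < n \<and> v2 < n \<and> v1 \<noteq> v2 \<longrightarrow>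
       hyp_prob n ((1 - \<epsilon>) / real n) (r / (real n * ln (real n)))
         (\<lambda>E2 E3. real (card (component n E2 E3 v1 v2))
                    \<ge> max 1 (2 * (9 + \<epsilon>) / r) * ln (real n))
       \<le> real n powr (I_const \<epsilon> r + g n)"
    using ev1 ev2
  proof eventually_elim
    case (elim n)
    then show ?case unfolding g_def using per_n[OF assms(1,2,3) elim(2) elim(1)] by blast
  qed
  then show ?thesis using lim by blast
qed

end
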